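(* Let $n\ge 1$ and let $\|\cdot\|_L$ be one of the vectorized norms $L_1,L_2,L_\infty$ on $\mathbb{R}^{n\times n}$. Let $M\subset\mathbb{R}^{n\times n}$ be a measurable set of finite positive Lebesgue measure containing an open ball $B(a,c)$ whose radius $c$ is large enough that $B(a,c)$ contains a singular matrix of rank $n-1$, and let $S_M$ be the set of singular matrices in $M$. Let $F:\mathbb{R}^{n\times n}\to\mathbb{R}^{n\times n}$ be any polynomial Lipschitz continuous function. Then for every $k>n^2$, $$\mathbb{E}_{x\sim M}\big[\|\mathrm{Inv}(x)-F(x)\|_L^k\big]=\frac{1}{m(M)}\int_{M\setminus S_M}\|\mathrm{Inv}(x)-F(x)\|_L^k\,dm(x)=+\infty.$$
   Context: $\mathrm{Inv}(x)=x^{-1}$ denotes matrix inversion, defined on invertible matrices; $S_M$ has Lebesgue measure zero. For $A=(a_{ij})\in\mathbb{R}^{n\times n}$ the norms are vectorized: $\|A\|_{L_1}=\sum_{i,j}|a_{ij}|$, $\|A\|_{L_2}=(\sum_{i,j}|a_{ij}|^2)^{1/2}$, $\|A\|_{L_\infty}=\max_{i,j}|a_{ij}|$; $\mathbb{R}^{n\times n}$ is identified with $\mathbb{R}^{n^2}$ with Lebesgue measure $m$. A function $f:\mathbb{R}^{n_1}\to\mathbb{R}^{n_2}$ is called polynomial Lipschitz continuous with respect to norms $\|\cdot\|_{L^+}$, $\|\cdot\|_{L^*}$ (chosen among $L_1,L_2,L_\infty$) if there exist a nonnegative integer $N$ and real polynomials $f_0,\dots,f_N$ in two variables such that for all $x,y$,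 $\|f(x)-f(y)\|_{L^*}\le \sum_{i=0}^{N} f_i(\|x\|_{L^+},\|y\|_{L^+})\|x-y\|_{L^+}^{i}$. *)

theory Defs
  imports "HOL-Analysis.Analysis"
begin

datatype vnorm_kind = L1 | L2 | Linf

definition vnorm :: "vnorm_kind \<Rightarrow> real^'n^'m \<Rightarrow> real" where
  "vnorm L A = (case L of
      L1 \<Rightarrow> (\<Sum>i\<in>UNIV. \<Sum>j\<in>UNIV. \<bar>A $ i $ j\<bar>)
    | L2 \<Rightarrow> sqrt (\<Sum>i\<in>UNIV. \<Sum>j\<in>UNIV. \<bar>A $ i $ j\<bar>^2)
    | Linf \<Rightarrow> Max {\<bar>A $ i $ j\<bar> | i j. True})"

text \<open>Real polynomials in two variables are
  represented explicitly by coefficient families: the i-th polynomial is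
  (s,t) \<mapsto> sum over p,q \<le> D of c i p q * s^p * t^q.\<close>
definition poly_lipschitz ::
  "vnorm_kind \<Rightarrow> vnorm_kind \<Rightarrow> (real^'n^'m \<Rightarrow> real^'k^'l) \<Rightarrow> bool" where
  "poly_lipschitz Lp Ls f \<longleftrightarrow>
     (\<exists>N::nat. \<exists>D::nat. \<exists>c::nat \<Rightarrow> nat \<Rightarrow> nat \<Rightarrow> real.
        \<forall>x y. vnorm Ls (f x - f y) \<le>
          (\<Sum>i\<le>N. (\<Sum>p\<le>D. \<Sum>q\<le>D. c i p q * (vnorm Lp x)^p * (vnorm Lp y)^q)
                    * (vnorm Lp (x - y))^i))"

definition Inv :: "real^'n^'n \<Rightarrow> real^'n^'n" where
  "Inv x = matrix_inv x"

definition vball :: "vnorm_kind \<Rightarrow> real^'n^'m \<Rightarrow> real \<Rightarrow> (real^'n^'m) set" where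
  "vball L a c = {x. vnorm L (x - a) < c}"

end

theory Submission
  imports Defs
begin

lemma cont_det: "continuous_on UNIV (det :: real^'n^'n \<Rightarrow> real)"
  unfolding det_def by (intro continuous_intros)

lemma fin_entries: "finite {\<bar>A $ i $ j\<bar> | i j. True}" for A :: "real^'n^'m"
proof -
  have "{\<bar>A $ i $ j\<bar> | i j. True} = (\<lambda>(i,j). \<bar>A $ i $ j\<bar>) ` UNIV" by auto
  then show ?thesis by simp
qed

lemma vnorm_entry: "\<bar>A $ i $ j\<bar> \<le> vnorm K (A::real^'n^'m)"
proof (cases K)
  case L1
  have "\<bar>A $ i $ j\<bar> \<le> (\<Sum>j\<in>UNIV. \<bar>A $ i $ j\<bar>)"
    by (rule member_le_sum) auto
  also have "\<dots> \<le> (\<Sum>i\<in>UNIV. \<Sum>j\<in>UNIV. \<bar>A $ i $ j\<bar>)"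
    by (rule member_le_sum[where f="\<lambda>i. \<Sum>j\<in>UNIV. \<bar>A $ i $ j\<bar>"]) (auto intro: sum_nonneg)
  finally show ?thesis using L1 by (simp add: vnorm_def)
next
  case L2
  have "\<bar>A $ i $ j\<bar>^2 \<le> (\<Sum>j\<in>UNIV. \<bar>A $ i $ j\<bar>^2)"
    by (rule member_le_sum) auto
  also have "\<dots> \<le> (\<Sum>i\<in>UNIV. \<Sum>j\<in>UNIV. \<bar>A $ i $ j\<bar>^2)"
    by (rule member_le_sum[where f="\<lambda>i. \<Sum>j\<in>UNIV. \<bar>A $ i $ j\<bar>^2"]) (auto intro: sum_nonneg)
  finally have "sqrt (\<bar>A $ i $ j\<bar>^2) \<le> sqrt (\<Sum>i\<in>UNIV. \<Sum>j\<in>UNIV. \<bar>A $ i $ j\<bar>^2)"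
    by (rule real_sqrt_le_mono)
  then show ?thesis using L2 by (simp add: vnorm_def)
next
  case Linf
  have "\<bar>A $ i $ j\<bar> \<le> Max {\<bar>A $ i $ j\<bar> | i j. True}"
    by (rule Max_ge[OF fin_entries]) auto
  then show ?thesis using Linf by (simp add: vnorm_def)
qed

lemma vnorm_le_sum: "vnorm K (A::real^'n^'m) \<le> (\<Sum>i\<in>UNIV. \<Sum>j\<in>UNIV. \<bar>A $ i $ j\<bar>)"
proof (cases K)
  case L1 then show ?thesis by (simp add: vnorm_def)
next
  case L2
  have "sqrt (\<Sum>i\<in>UNIV. \<Sum>j\<in>UNIV. \<bar>A $ i $ j\<bar>^2) = L2_set (\<lambda>p. \<bar>A $ fst p $ snd p\<bar>) UNIV"
    by (simp add: L2_set_def sum.cartesian_product split_def)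
  also have "\<dots> \<le> (\<Sum>p\<in>UNIV. \<bar>A $ fst p $ snd p\<bar>)"
    by (rule L2_set_le_sum) auto
  also have "\<dots> = (\<Sum>i\<in>UNIV. \<Sum>j\<in>UNIV. \<bar>A $ i $ j\<bar>)"
    by (simp add: sum.cartesian_product split_def)
  finally have "sqrt (\<Sum>i\<in>UNIV. \<Sum>j\<in>UNIV. \<bar>A $ i $ j\<bar>^2) \<le> (\<Sum>i\<in>UNIV. \<Sum>j\<in>UNIV. \<bar>A $ i $ j\<bar>)" .
  then show ?thesis using L2 by (simp add: vnorm_def)
next
  case Linf
  have "Max {\<bar>A $ i $ j\<bar> | i j. True} \<le> (\<Sum>i\<in>UNIV. \<Sum>j\<in>UNIV. \<bar>A $ i $ j\<bar>)"
  proof (subst Max_le_iff)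
    show "finite {\<bar>A $ i $ j\<bar> | i j. True}" by (rule fin_entries)
    show "{\<bar>A $ i $ j\<bar> | i j. True} \<noteq> {}" by auto
    show "\<forall>a\<in>{\<bar>A $ i $ j\<bar> | i j. True}. a \<le> (\<Sum>i\<in>UNIV. \<Sum>j\<in>UNIV. \<bar>A $ i $ j\<bar>)"
      using vnorm_entry[of A _ _ L1] by (auto simp: vnorm_def)
  qed
  then show ?thesis using Linf by (simp add: vnorm_def)
qed

lemma entry_le_norm: "\<bar>A $ i $ j\<bar> \<le> norm (A::real^'n^'m)"
proof -
  have "\<bar>A $ i $ j\<bar> \<le> norm (A $ i)" using component_le_norm_cart[of "A $ i" j] by simp
  also have "\<dots> \<le> norm A" by (rule Finite_Cartesian_Product.norm_nth_le)
  finally show ?thesis .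
qed

lemma vnorm_Linf_less: "vnorm Linf (X::real^'n^'m) < c \<longleftrightarrow> (\<forall>i j. \<bar>X $ i $ j\<bar> < c)"
  unfolding vnorm_def vnorm_kind.case by (subst Max_less_iff[OF fin_entries]) auto

lemma vnorm_le_norm: "vnorm K (A::real^'n^'m) \<le> real (CARD('m) * CARD('n)) * norm A"
proof -
  have "vnorm K A \<le> (\<Sum>i\<in>(UNIV::'m set). \<Sum>j\<in>(UNIV::'n set). norm A)"
    using vnorm_le_sum[of K A] entry_le_norm[of A] by (meson order_trans sum_mono)
  then show ?thesis by simp
qed

lemma vnorm_nonneg: "0 \<le> vnorm K (A::real^'n^'m)"
  using vnorm_entry[of A _ _ K] by (meson abs_ge_zero order_trans)

lemma open_vball: "open (vball K (a::real^'n^'m) c)"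
proof (cases K)
  case L1
  show ?thesis unfolding vball_def L1 vnorm_def
    by (simp, intro open_Collect_less continuous_intros)
next
  case L2
  show ?thesis unfolding vball_def L2 vnorm_def
    by (simp, intro open_Collect_less continuous_intros)
next
  case Linf
  have "vball K a c = (\<Inter>p\<in>UNIV. {x. \<bar>(x - a) $ fst p $ snd p\<bar> < c})"
    unfolding vball_def Linf vnorm_Linf_less by auto
  also have "open \<dots>"
    by (intro open_INT ballI open_Collect_less continuous_intros) auto
  finally show ?thesis .
qed


definition gam :: "'n::finite \<Rightarrow> 'n \<Rightarrow> real^'n^'n \<Rightarrow> real" where
  "gam i0 j0 x = det ((\<chi> r. if r = i0 then axis j0 1 else x $ r) :: real^'n^'n)"

definition Emat :: "'n::finite \<Rightarrow> 'n \<Rightarrow> real^'n^'n" where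
  "Emat i0 j0 = (\<chi> r. if r = i0 then axis j0 1 else 0)"

lemma det_line: fixes x :: "real^'n^'n" shows "det (x + t *\<^sub>R Emat i0 j0) = det x + t * gam i0 j0 x"
proof -
  have "x + t *\<^sub>R Emat i0 j0 = (\<chi> r. if r = i0 then x $ r + t *s axis j0 1 else x $ r)"
    by (simp add: Emat_def vec_eq_iff scalar_mult_eq_scaleR)
  then have "det (x + t *\<^sub>R Emat i0 j0) =
     det ((\<chi> r. if r = i0 then x $ r else x $ r) :: real^'n^'n) + det ((\<chi> r. if r = i0 then t *s axis j0 1 else x $ r) :: real^'n^'n)"
    using det_row_add[of i0 "\<lambda>r. x $ r" "\<lambda>_. t *s axis j0 1" "\<lambda>r. x $ r"] by simp
  also have "det ((\<chi> r. if r = i0 then t *s axis j0 1 else x $ r) :: real^'n^'n) = t * gam i0 j0 x"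
    unfolding gam_def by (rule det_row_mul)
  finally show ?thesis by simp
qed

lemma gam_line: fixes x :: "real^'n^'n" shows "gam i0 j0 (x + t *\<^sub>R Emat i0 j0) = gam i0 j0 x"
  unfolding gam_def by (rule arg_cong[where f=det]) (simp add: Emat_def vec_eq_iff)

lemma inv_entry: fixes x :: "real^'n^'n"
  assumes "det x \<noteq> 0"
  shows "Inv x $ j0 $ i0 = gam i0 j0 x / det x"
proof -
  have inv: "invertible x" using assms invertible_det_nz by blast
  let ?B = "matrix_inv x"
  have BX: "?B ** x = mat 1" using inv unfolding invertible_def matrix_inv_def by (metis (mono_tags, lifting) someI_ex)
  have "transpose x *v (?B $ j0) = axis j0 1"
  proof -
    have "(transpose x *v (?B $ j0)) $ i = (?B ** x) $ j0 $ i" for i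
      by (simp add: matrix_vector_mult_def matrix_matrix_mult_def transpose_def mult.commute)
    then show ?thesis using BX by (simp add: vec_eq_iff mat_def axis_def)
  qed
  moreover have dT: "det (transpose x) \<noteq> 0" using assms by (simp add: det_transpose)
  ultimately have "?B $ j0 = (\<chi> k. det(\<chi> i j. if j=k then (axis j0 1 :: real^'n)$i else transpose x$i$j) / det (transpose x))"
    using cramer[OF dT] by blast
  then have "?B $ j0 $ i0 = det(\<chi> i j. if j=i0 then (axis j0 1 :: real^'n)$i else transpose x$i$j) / det x"
    by (simp add: det_transpose)
  also have "(\<chi> i j. if j=i0 then (axis j0 1 :: real^'n)$i else transpose x$i$j) =
      transpose ((\<chi> r. if r = i0 then axis j0 1 else x $ r) :: real^'n^'n)"
    by (simp add: vec_eq_iff transpose_def)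
  finally show ?thesis by (simp add: Inv_def gam_def det_transpose)
qed

lemma cont_gam: "continuous_on UNIV (gam i0 j0)"
  unfolding gam_def det_def
  apply (intro continuous_intros)
  subgoal for p i r by (cases "r = i0") (auto intro: continuous_intros)
  done


lemma cofactor_exists:
  fixes y :: "real^'n^'n"
  assumes rk: "rank y = CARD('n) - 1"
  shows "\<exists>i0 j0. gam i0 j0 y \<noteq> 0"
proof -
  obtain B where BV: "B \<subseteq> rows y" and indB: "independent B" and spB: "rows y \<subseteq> span B"
    and cB: "card B = dim (rows y)"
    using basis_exists[of "rows y"] by blast
  have cardB: "card B = CARD('n) - 1" using cB rk by (simp add: row_rank_def)
  have finB: "finite B" using indB by (simp add: independent_imp_finite)
  define idx where "idx b = (SOME i. b = row i y)" for b
  have idx: "b = row (idx b) y" if "b \<in> B" for b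
  proof -
    from that BV obtain i where "b = row i y" by (auto simp: rows_def)
    then show ?thesis unfolding idx_def by (rule someI)
  qed
  have "inj_on idx B" by (metis idx inj_onI)
  then have "card (idx ` B) = CARD('n) - 1" using cardB by (simp add: card_image)
  moreover have "CARD('n) > 0" by simp
  ultimately have "idx ` B \<noteq> UNIV" by (metis diff_less less_irrefl_nat zero_less_one)
  then obtain i0 where i0: "i0 \<notin> idx ` B" by blast
  have "\<exists>e\<in>Basis. e \<notin> span B"
  proof (rule ccontr)
    assume "\<not> ?thesis"
    then have "Basis \<subseteq> span B" by blast
    then have "span Basis \<subseteq> span B" by (metis span_mono span_span)
    then have "UNIV \<subseteq> span B" by simp
    then have "dim (UNIV :: (real^'n) set) \<le> dim (span B)" by (metis dim_subset)
    also have "dim (span B) = card B" using indB by (simp add: dim_span dim_eq_card_independent)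
    finally have "dim (UNIV :: (real^'n) set) \<le> card B" .
    moreover have "dim (UNIV :: (real^'n) set) = CARD('n)" by simp
    moreover have "CARD('n) > 0" by simp
    ultimately show False using cardB by linarith
  qed
  then obtain e where eB: "e \<in> Basis" and enot: "e \<notin> span B" by blast
  from eB obtain j0 where ej: "e = axis j0 1" by (auto simp: Basis_vec_def)
  define z where "z = ((\<chi> r. if r = i0 then axis j0 1 else y $ r) :: real^'n^'n)"
  have sub: "insert e B \<subseteq> rows z"
  proof
    fix b assume "b \<in> insert e B"
    then show "b \<in> rows z"
    proof
      assume "b = e" then have "b = row i0 z" by (simp add: z_def ej row_def vec_eq_iff)
      then show ?thesis by (auto simp: rows_def)
    next
      assume bB: "b \<in> B"
      then have "idx b \<noteq> i0" using i0 by auto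
      then have "b = row (idx b) z" using idx[OF bB] by (simp add: z_def row_def vec_eq_iff)
      then show ?thesis by (auto simp: rows_def)
    qed
  qed
  have ind2: "independent (insert e B)" using indB enot by (simp add: independent_insert)
  have "e \<notin> B" using enot span_base by blast
  then have "card (insert e B) = CARD('n)" using cardB finB by simp
  then have "CARD('n) \<le> dim (rows z)"
    using dim_subset[OF sub] ind2 by (simp add: dim_eq_card_independent)
  then have "\<not> rank z < CARD('n)" by (simp add: row_rank_def)
  then have "det z \<noteq> 0" by (simp add: det_eq_0_rank)
  then show ?thesis unfolding gam_def z_def by blast
qed


lemma log_piece:
  fixes t0 d e :: real
  assumes "0 < e" "e \<le> d"
  shows "(\<integral>\<^sup>+ t. ennreal (1 / (2 * (t - t0))) * indicator {t0+e..t0+d} t \<partial>lborel) = ennreal ((ln d - ln e) / 2)"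
proof -
  have "((\<lambda>t. 1 / (2 * (t - t0))) has_integral ((\<lambda>t. ln (t - t0) / 2) (t0+d) - (\<lambda>t. ln (t - t0) / 2) (t0+e))) {t0+e..t0+d}"
  proof (rule fundamental_theorem_of_calculus)
    show "t0 + e \<le> t0 + d" using assms by simp
    fix x assume x: "x \<in> {t0+e..t0+d}"
    then have "x - t0 > 0" using assms by auto
    then have "((\<lambda>t. ln (t - t0) / 2) has_real_derivative 1 / (2 * (x - t0))) (at x within {t0+e..t0+d})"
      by (auto intro!: derivative_eq_intros simp: field_simps)
    then show "((\<lambda>t. ln (t - t0) / 2) has_vector_derivative 1 / (2 * (x - t0))) (at x within {t0+e..t0+d})"
      by (simp add: has_real_derivative_iff_has_vector_derivative)
  qed
  then have hi: "((\<lambda>t. 1 / (2 * (t - t0))) has_integral (ln d - ln e) / 2) {t0+e..t0+d}"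
    by (simp add: diff_divide_distrib)
  show ?thesis
    by (rule nn_integral_has_integral_lebesgue'[OF _ hi]) (use assms in auto)
qed

lemma one_over_diverge:
  fixes t0 d :: real
  assumes d: "0 < d"
  shows "(\<integral>\<^sup>+ t. indicator {t0<..t0+d} t * ennreal (1 / (2 * (t - t0))) \<partial>lborel) = \<infinity>"
proof (rule ccontr)
  let ?S = "(\<integral>\<^sup>+ t. indicator {t0<..t0+d} t * ennreal (1 / (2 * (t - t0))) \<partial>lborel)"
  assume "?S \<noteq> \<infinity>"
  then obtain R where R: "?S = ennreal R" "0 \<le> R" by (cases ?S) auto
  define e where "e = d * exp (-(2*R+2))"
  have e0: "0 < e" using d by (simp add: e_def)
  have "exp (-(2*R+2)) \<le> 1" using R by simp
  then have ed: "e \<le> d" using d unfolding e_def by (simp add: mult_left_le)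
  have "ln e = ln d - (2*R+2)" using d by (simp add: e_def ln_mult)
  then have val: "(ln d - ln e) / 2 = R + 1" by simp
  have "ennreal (R + 1) = (\<integral>\<^sup>+ t. ennreal (1 / (2 * (t - t0))) * indicator {t0+e..t0+d} t \<partial>lborel)"
    using log_piece[OF e0 ed, of t0] val by simp
  also have "\<dots> \<le> ?S"
  proof (rule nn_integral_mono)
    fix t
    show "ennreal (1 / (2 * (t - t0))) * indicator {t0+e..t0+d} t \<le> indicator {t0<..t0+d} t * ennreal (1 / (2 * (t - t0)))"
      using e0 by (cases "t \<in> {t0+e..t0+d}") (auto simp: indicator_def)
  qed
  finally have "ennreal (R + 1) \<le> ennreal R" using R by simp
  then show False using R by (simp add: ennreal_le_iff)
qed


lemma translate_nn:
  fixes G :: "'a::euclidean_space \<Rightarrow> ennreal"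
  assumes G: "G \<in> borel_measurable borel"
  shows "(\<integral>\<^sup>+ x. G (x + c) \<partial>lborel) = (\<integral>\<^sup>+ z. G z \<partial>lborel)"
proof -
  have "(\<integral>\<^sup>+ z. G z \<partial>lborel) = (\<integral>\<^sup>+ z. G z \<partial>(distr lborel borel ((+) c)))"
    by (simp add: lborel_distr_plus)
  also have "\<dots> = (\<integral>\<^sup>+ x. G (c + x) \<partial>lborel)"
    by (rule nn_integral_distr) (use G in auto)
  finally show ?thesis by (simp add: add.commute)
qed

lemma open_pos_measure:
  fixes U :: "'a::euclidean_space set"
  assumes "open U" "x \<in> U"
  shows "0 < emeasure lborel U"
proof -
  obtain a b where ab: "box a b \<subseteq> U" "x \<in> box a b" "\<forall>i\<in>Basis. a \<bullet> i < b \<bullet> i"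
    using open_contains_box[OF assms] by blast
  have p: "0 < (\<Prod>i\<in>Basis. (b - a) \<bullet> i)" using ab(3) by (intro prod_pos) (auto simp: inner_diff_left)
  have "emeasure lborel (box a b) = ennreal (\<Prod>i\<in>Basis. (b - a) \<bullet> i)"
    using ab(3) by (subst emeasure_lborel_box) (auto simp: less_imp_le)
  then have "0 < emeasure lborel (box a b)" using p by simp
  also have "\<dots> \<le> emeasure lborel U" using ab(1) assms(1) by (intro emeasure_mono) auto
  finally show ?thesis by simp
qed

lemma tonelli_blowup:
  fixes G :: "'a::euclidean_space \<Rightarrow> ennreal" and E :: 'a
  assumes G: "G \<in> borel_measurable borel"
    and U: "open U" "y \<in> U" and s: "0 < s"
    and line: "\<And>x. x \<in> U \<Longrightarrow> (\<integral>\<^sup>+ t. indicator {-s..s} t * G (x + t *\<^sub>R E) \<partial>lborel) = \<infinity>"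
  shows "(\<integral>\<^sup>+ z. G z \<partial>lborel) = \<infinity>"
proof (rule ccontr)
  assume fin: "(\<integral>\<^sup>+ z. G z \<partial>lborel) \<noteq> \<infinity>"
  define H where "H x t = indicator U x * (indicator {-s..s} t * G (x + t *\<^sub>R E))" for x t
  have Hm: "case_prod H \<in> borel_measurable (lborel \<Otimes>\<^sub>M lborel)"
  proof -
    have c: "continuous_on UNIV (\<lambda>p::'a \<times> real. fst p + snd p *\<^sub>R E)"
      by (intro continuous_intros)
    have "(\<lambda>p::'a \<times> real. G (fst p + snd p *\<^sub>R E)) \<in> borel_measurable borel"
      by (rule measurable_compose[OF borel_measurable_continuous_onI[OF c] G])
    moreover have "(\<lambda>p::'a \<times> real. indicator U (fst p) :: ennreal) \<in> borel_measurable borel"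
    proof -
      have "open (U \<times> (UNIV::real set))" using U(1) by (intro open_Times) auto
      then have "(indicator (U \<times> (UNIV::real set)) :: 'a \<times> real \<Rightarrow> ennreal) \<in> borel_measurable borel"
        by (intro borel_measurable_indicator borel_open)
      moreover have "indicator (U \<times> (UNIV::real set)) = (\<lambda>p::'a \<times> real. indicator U (fst p) :: ennreal)"
        by (auto simp: indicator_def fun_eq_iff)
      ultimately show ?thesis by simp
    qed
    moreover have "(\<lambda>p::'a \<times> real. indicator {-s..s} (snd p) :: ennreal) \<in> borel_measurable borel"
    proof -
      have "closed ((UNIV::'a set) \<times> {-s..s})" by (intro closed_Times) auto
      then have "(indicator ((UNIV::'a set) \<times> {-s..s}) :: 'a \<times> real \<Rightarrow> ennreal) \<in> borel_measurable borel"
        by (intro borel_measurable_indicator borel_closed)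
      moreover have "indicator ((UNIV::'a set) \<times> {-s..s}) = (\<lambda>p::'a \<times> real. indicator {-s..s} (snd p) :: ennreal)"
        by (auto simp: indicator_def fun_eq_iff)
      ultimately show ?thesis by simp
    qed
    ultimately have "(\<lambda>p::'a \<times> real. indicator U (fst p) * (indicator {-s..s} (snd p) * G (fst p + snd p *\<^sub>R E))) \<in> borel_measurable borel"
      by (intro borel_measurable_times_ennreal) auto
    then show ?thesis unfolding lborel_prod H_def split_beta by simp
  qed
  have "(\<integral>\<^sup>+ x. (\<integral>\<^sup>+ t. H x t \<partial>lborel) \<partial>lborel) = (\<integral>\<^sup>+ x. \<infinity> * indicator U x \<partial>lborel)"
  proof (rule nn_integral_cong)
    fix x :: 'a
    show "(\<integral>\<^sup>+ t. H x t \<partial>lborel) = \<infinity> * indicator U x"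
      using line[of x] by (cases "x \<in> U") (simp_all add: H_def)
  qed
  also have "\<dots> = \<infinity> * emeasure lborel U"
    using U(1) by (intro nn_integral_cmult_indicator) auto
  also have "\<dots> = \<infinity>" using open_pos_measure[OF U] by (simp add: ennreal_top_mult)
  finally have inf: "(\<integral>\<^sup>+ x. (\<integral>\<^sup>+ t. H x t \<partial>lborel) \<partial>lborel) = \<infinity>" .
  have "(\<integral>\<^sup>+ x. (\<integral>\<^sup>+ t. H x t \<partial>lborel) \<partial>lborel) = (\<integral>\<^sup>+ t. (\<integral>\<^sup>+ x. H x t \<partial>lborel) \<partial>lborel)"
    using lborel_pair.Fubini'[OF Hm] by simp
  also have "\<dots> \<le> (\<integral>\<^sup>+ t. (\<integral>\<^sup>+ z. G z \<partial>lborel) * indicator {-s..s} t \<partial>lborel)"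
  proof (rule nn_integral_mono)
    fix t :: real
    have "(\<integral>\<^sup>+ x. H x t \<partial>lborel) \<le> (\<integral>\<^sup>+ x. indicator {-s..s} t * G (x + t *\<^sub>R E) \<partial>lborel)"
      by (rule nn_integral_mono) (auto simp: H_def indicator_def)
    also have "\<dots> = indicator {-s..s} t * (\<integral>\<^sup>+ x. G (x + t *\<^sub>R E) \<partial>lborel)"
      by (rule nn_integral_cmult) (use G in measurable)
    also have "\<dots> = indicator {-s..s} t * (\<integral>\<^sup>+ z. G z \<partial>lborel)"
      using translate_nn[OF G] by simp
    finally show "(\<integral>\<^sup>+ x. H x t \<partial>lborel) \<le> (\<integral>\<^sup>+ z. G z \<partial>lborel) * indicator {-s..s} t"
      by (simp add: mult.commute)
  qed
  also have "\<dots> = (\<integral>\<^sup>+ z. G z \<partial>lborel) * emeasure lborel {-s..s}"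
    by (rule nn_integral_cmult_indicator) auto
  also have "\<dots> < \<infinity>" using fin s by (simp add: ennreal_mult_less_top top.not_eq_extremum)
  finally show False using inf by simp
qed


lemma poly_bound:
  fixes u v R :: real
  assumes "0 \<le> u" "u \<le> R" "0 \<le> v"
  shows "(\<Sum>i\<le>N. (\<Sum>p\<le>D. \<Sum>q\<le>D. c i p q * u^p * v^q) * u^i)
     \<le> (\<Sum>i\<le>N. (\<Sum>p\<le>D. \<Sum>q\<le>D. \<bar>c i p q\<bar> * R^p * v^q) * R^i)"
proof -
  have "(\<Sum>i\<le>N. (\<Sum>p\<le>D. \<Sum>q\<le>D. c i p q * u^p * v^q) * u^i)
      = (\<Sum>i\<le>N. \<Sum>p\<le>D. \<Sum>q\<le>D. c i p q * (u^p * v^q * u^i))"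
    by (simp add: sum_distrib_right mult.assoc)
  also have "\<dots> \<le> (\<Sum>i\<le>N. \<Sum>p\<le>D. \<Sum>q\<le>D. \<bar>c i p q\<bar> * (R^p * v^q * R^i))"
  proof (intro sum_mono)
    fix i p q
    have X0: "0 \<le> u^p * v^q * u^i" using assms by simp
    have XY: "u^p * v^q * u^i \<le> R^p * v^q * R^i"
      using assms by (intro mult_mono power_mono) auto
    have "c i p q * (u^p * v^q * u^i) \<le> \<bar>c i p q\<bar> * (u^p * v^q * u^i)"
      using X0 by (intro mult_right_mono) auto
    also have "\<dots> \<le> \<bar>c i p q\<bar> * (R^p * v^q * R^i)"
      using XY by (intro mult_left_mono) auto
    finally show "c i p q * (u^p * v^q * u^i) \<le> \<bar>c i p q\<bar> * (R^p * v^q * R^i)" .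
  qed
  also have "\<dots> = (\<Sum>i\<le>N. (\<Sum>p\<le>D. \<Sum>q\<le>D. \<bar>c i p q\<bar> * R^p * v^q) * R^i)"
    by (simp add: sum_distrib_right mult.assoc)
  finally show ?thesis .
qed

lemma real_ineq:
  fixes u Cf k :: real
  assumes "0 < u" "u \<le> 1 / (2*Cf+2)" "0 \<le> Cf" "1 \<le> k"
  shows "1 / (2*u) \<le> (max 0 (1/u - Cf)) powr k"
proof -
  have "2*Cf+2 \<le> 1/u" using assms by (simp add: field_simps)
  then have h1: "1/(2*u) \<le> 1/u - Cf" and h2: "1 \<le> 1/u - Cf" using assms by (auto simp: field_simps)
  have "1/u - Cf = (1/u - Cf) powr 1" using h2 by simp
  also have "\<dots> \<le> (1/u - Cf) powr k" using h2 assms(4) by (intro powr_mono) auto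
  finally have "1 / (2*u) \<le> (1/u - Cf) powr k" using h1 by linarith
  moreover have "max 0 (1/u - Cf) = 1/u - Cf" using h2 by simp
  ultimately show ?thesis by simp
qed


theorem theorem3p9:
  fixes L Lp Ls :: vnorm_kind
    and M :: "(real^'n^'n) set"
    and a :: "real^'n^'n" and c :: real
    and F :: "real^'n^'n \<Rightarrow> real^'n^'n"
    and k :: real
  assumes M_meas: "M \<in> sets lebesgue"
    and M_pos: "0 < emeasure lebesgue M"
    and M_fin: "emeasure lebesgue M < \<infinity>"
    and ball_sub: "vball L a c \<subseteq> M"
    and ball_rank: "\<exists>y \<in> vball L a c. rank y = CARD('n) - 1"
    and F_pl: "poly_lipschitz Lp Ls F"
    and k_gt: "k > real (CARD('n)^2)"
  shows "(\<integral>\<^sup>+ x \<in> M - {x \<in> M. \<not> invertible x}.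
            ennreal (vnorm L (Inv x - F x) powr k) \<partial>lebesgue)
           / emeasure lebesgue M = \<infinity>"
proof -
  have k1: "1 \<le> k"
  proof -
    have "(1::real) \<le> real (CARD('n)^2)" by simp
    then show ?thesis using k_gt by linarith
  qed
  obtain y where yB: "y \<in> vball L a c" and rk: "rank y = CARD('n) - 1" using ball_rank by blast
  have "rank y < CARD('n)" using rk by simp
  then have dety: "det y = 0" by (simp add: det_eq_0_rank)
  obtain i0 j0 where gy: "gam i0 j0 y \<noteq> 0" using cofactor_exists[OF rk] by blast
  define g0 where "g0 = \<bar>gam i0 j0 y\<bar> / 2"
  have g0: "0 < g0" using gy by (simp add: g0_def)
  define W where "W = vball L a c \<inter> {x. g0 < \<bar>gam i0 j0 x\<bar>}"
  have "open W" unfolding W_def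
    by (intro open_Int open_vball open_Collect_less continuous_intros cont_gam[THEN continuous_on_subset]) auto
  moreover have "y \<in> W" using yB gy g0 by (simp add: W_def g0_def)
  ultimately obtain \<rho> where \<rho>: "0 < \<rho>" "ball y \<rho> \<subseteq> W" by (meson open_contains_ball)
  have inM: "z \<in> M" and gz: "g0 < \<bar>gam i0 j0 z\<bar>" if "z \<in> ball y \<rho>" for z
    using that \<rho> ball_sub unfolding W_def by auto
  obtain N D cc where PL: "\<And>x z. vnorm Ls (F x - F z) \<le>
          (\<Sum>i\<le>N. (\<Sum>p\<le>D. \<Sum>q\<le>D. cc i p q * (vnorm Lp x)^p * (vnorm Lp z)^q) * (vnorm Lp (x - z))^i)"
    using F_pl unfolding poly_lipschitz_def by blast
  define R where "R = real (CARD('n) * CARD('n)) * (norm y + \<rho>)"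
  define Q where "Q = (\<Sum>i\<le>N. (\<Sum>p\<le>D. \<Sum>q\<le>D. \<bar>cc i p q\<bar> * R^p * (vnorm Lp (0::real^'n^'n))^q) * R^i)"
  define Cf where "Cf = \<bar>F 0 $ j0 $ i0\<bar> + \<bar>Q\<bar>"
  have Cf0: "0 \<le> Cf" by (simp add: Cf_def)
  have Fb: "\<bar>F z $ j0 $ i0\<bar> \<le> Cf" if "z \<in> ball y \<rho>" for z
  proof -
    have "norm z \<le> norm y + \<rho>" using that norm_triangle_sub[of z y]
      by (simp add: dist_norm norm_minus_commute)
    then have "vnorm Lp z \<le> R" unfolding R_def
      using vnorm_le_norm[of Lp z] by (meson mult_left_mono of_nat_0_le_iff order_trans)
    then have "(\<Sum>i\<le>N. (\<Sum>p\<le>D. \<Sum>q\<le>D. cc i p q * (vnorm Lp z)^p * (vnorm Lp (0::real^'n^'n))^q) * (vnorm Lp z)^i) \<le> Q"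
      unfolding Q_def by (intro poly_bound vnorm_nonneg)
    then have "vnorm Ls (F z - F 0) \<le> Q"
      using PL[of z 0] by simp
    then have "\<bar>(F z - F 0) $ j0 $ i0\<bar> \<le> Q" using vnorm_entry by (meson order_trans)
    then show ?thesis unfolding Cf_def by simp
  qed
  define G where "G z = indicator (ball y \<rho>) z * ennreal ((max 0 (\<bar>gam i0 j0 z / det z\<bar> - Cf)) powr k)" for z
  have Gm: "G \<in> borel_measurable borel"
  proof -
    have [measurable]: "(\<lambda>x. gam i0 j0 x) \<in> borel_measurable borel" by (rule borel_measurable_continuous_onI[OF cont_gam])
    have [measurable]: "(\<lambda>x. det x :: real) \<in> borel_measurable (borel :: (real^'n^'n) measure)" using borel_measurable_continuous_onI[OF cont_det] by simp
    have [measurable]: "ball y \<rho> \<in> sets borel" by simp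
    show ?thesis unfolding G_def by measurable
  qed
  have Gle: "G z \<le> ennreal (vnorm L (Inv z - F z) powr k) * indicator (M - {x \<in> M. \<not> invertible x}) z" for z
  proof (cases "z \<in> ball y \<rho> \<and> det z \<noteq> 0")
    case True
    then have "invertible z" "z \<in> M" using inM invertible_det_nz by auto
    then have ind: "indicator (M - {x \<in> M. \<not> invertible x}) z = (1::ennreal)" by simp
    have "\<bar>gam i0 j0 z / det z\<bar> - Cf \<le> \<bar>(Inv z - F z) $ j0 $ i0\<bar>"
      using inv_entry[of z j0 i0] True Fb[of z] by auto
    also have "\<dots> \<le> vnorm L (Inv z - F z)" by (rule vnorm_entry)
    finally have "max 0 (\<bar>gam i0 j0 z / det z\<bar> - Cf) \<le> vnorm L (Inv z - F z)" using vnorm_nonneg by simp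
    then have "(max 0 (\<bar>gam i0 j0 z / det z\<bar> - Cf)) powr k \<le> vnorm L (Inv z - F z) powr k"
      by (intro powr_mono2) (use k1 in auto)
    then show ?thesis using True ind by (simp add: G_def)
  next
    case False
    then have "G z = 0" using Cf0 by (auto simp: G_def)
    then show ?thesis by simp
  qed
  define E where "E = Emat i0 j0"
  define s where "s = \<rho> / (2 * (norm E + 1))"
  have s0: "0 < s" using \<rho> unfolding s_def by (intro divide_pos_pos) (auto intro: add_nonneg_pos)
  have sE: "s * norm E < \<rho> / 2"
  proof -
    have "s * norm E = \<rho> / 2 * (norm E / (norm E + 1))" by (simp add: s_def field_simps)
    also have "\<dots> < \<rho> / 2 * 1" using \<rho> by (intro mult_strict_left_mono) (auto simp: divide_less_eq add_nonneg_pos)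
    finally show ?thesis by simp
  qed
  define U where "U = ball y (\<rho>/2) \<inter> {x. \<bar>det x\<bar> < s * g0}"
  have Uo: "open U" unfolding U_def
    by (intro open_Int open_ball open_Collect_less continuous_intros cont_det[THEN continuous_on_subset]) auto
  have yU: "y \<in> U" using \<rho> dety s0 g0 by (simp add: U_def)
  have line: "(\<integral>\<^sup>+ t. indicator {-s..s} t * G (x + t *\<^sub>R E) \<partial>lborel) = \<infinity>" if xU: "x \<in> U" for x
  proof -
    define A where "A = gam i0 j0 x"
    define B where "B = det x"
    have xb: "x \<in> ball y \<rho>" using xU \<rho>(1) by (auto simp: U_def)
    have A: "g0 < \<bar>A\<bar>" using gz[OF xb] by (simp add: A_def)
    have "\<bar>B\<bar> < s * g0" using xU by (simp add: U_def B_def)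
    also have "\<dots> \<le> s * \<bar>A\<bar>" using A s0 by simp
    finally have BA: "\<bar>B\<bar> < s * \<bar>A\<bar>" .
    define t0 where "t0 = - B / A"
    have A0: "A \<noteq> 0" using A g0 by auto
    have t0s: "\<bar>t0\<bar> < s" using BA A0 by (simp add: t0_def abs_divide divide_less_eq)
    define d where "d = min (1 / (2*Cf+2)) (s - t0)"
    have d0: "0 < d" using t0s Cf0 by (simp add: d_def)
    have "(\<integral>\<^sup>+ t. indicator {t0<..t0+d} t * ennreal (1 / (2 * (t - t0))) \<partial>lborel)
        \<le> (\<integral>\<^sup>+ t. indicator {-s..s} t * G (x + t *\<^sub>R E) \<partial>lborel)"
    proof (rule nn_integral_mono)
      fix t
      show "indicator {t0<..t0+d} t * ennreal (1 / (2 * (t - t0))) \<le> indicator {-s..s} t * G (x + t *\<^sub>R E)"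
      proof (cases "t \<in> {t0<..t0+d}")
        case False then show ?thesis by simp
      next
        case True
        then have tt: "t0 < t" "t \<le> t0 + d" by auto
        have ts: "t \<in> {-s..s}" using tt t0s by (auto simp: d_def)
        have "dist y (x + t *\<^sub>R E) \<le> dist y x + norm (t *\<^sub>R E)"
          by (metis dist_norm dist_triangle2 add_diff_cancel_left' norm_minus_commute)
        also have "norm (t *\<^sub>R E) \<le> s * norm E" using ts by (auto intro: mult_right_mono)
        finally have "dist y (x + t *\<^sub>R E) < \<rho>" using sE xU by (auto simp: U_def)
        then have inb: "x + t *\<^sub>R E \<in> ball y \<rho>" by simp
        have dl: "det (x + t *\<^sub>R E) = A * (t - t0)"
          using A0 by (simp add: E_def det_line A_def B_def t0_def field_simps)
        have gl: "gam i0 j0 (x + t *\<^sub>R E) = A" by (simp add: E_def gam_line A_def)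
        have q: "\<bar>gam i0 j0 (x + t *\<^sub>R E) / det (x + t *\<^sub>R E)\<bar> = 1 / (t - t0)"
          using A0 tt by (simp add: dl gl abs_divide abs_mult)
        have "1 / (2 * (t - t0)) \<le> (max 0 (1/(t - t0) - Cf)) powr k"
          using tt Cf0 k1 by (intro real_ineq) (auto simp: d_def)
        then have "ennreal (1 / (2 * (t - t0))) \<le> G (x + t *\<^sub>R E)"
          using inb q by (simp add: G_def ennreal_leI)
        then show ?thesis using True ts by simp
      qed
    qed
    then show ?thesis using one_over_diverge[OF d0, of t0] by (simp add: top_unique)
  qed
  have Ginf: "(\<integral>\<^sup>+ z. G z \<partial>lborel) = \<infinity>"
    by (rule tonelli_blowup[OF Gm Uo yU s0 line])
  have "(\<integral>\<^sup>+ z. G z \<partial>lborel) \<le> (\<integral>\<^sup>+ x \<in> M - {x \<in> M. \<not> invertible x}.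
            ennreal (vnorm L (Inv x - F x) powr k) \<partial>lebesgue)"
    unfolding nn_integral_completion by (rule nn_integral_mono) (rule Gle)
  then have I: "(\<integral>\<^sup>+ x \<in> M - {x \<in> M. \<not> invertible x}.
            ennreal (vnorm L (Inv x - F x) powr k) \<partial>lebesgue) = \<infinity>"
    using Ginf by (simp add: top_unique)
  show ?thesis using M_fin by (simp add: I ennreal_top_divide)
qed

end
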